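(* In the model described in the context, suppose $\triangle C=0$. Let $\underline\alpha_x=(M+N+1)k$ and $\bar\alpha_x=\frac{(M+1)\sqrt{N+1}}{2(\sqrt{N+1}-1)}Nk$. Then for all $\alpha_x\in[\underline\alpha_x,\bar\alpha_x]$ there exist $(f,x)\in Q$ and $x_S\in X(0)$ such that \[Mx+Ny_j(f\mathbf1,x\mathbf1)<Mx_S+Ny_j(\mathbf0,x_S\mathbf1),\qquad \mathsf{SW}(y_j(f\mathbf1,x\mathbf1),x)<\mathsf{SW}(y_j(\mathbf0,x_S\mathbf1),x_S).\] Moreover, \[\frac{Mx_S+Ny_j(\mathbf0,x_S\mathbf1)}{Mx+Ny_j(f\mathbf1,x\mathbf1)}\le\frac{(MN+M+N)(M+1)}{M(M+1)(N+1)+2(N+1-\sqrt{N+1})},\] \[\frac{\mathsf{SW}(y_j(\mathbf0,x_S\mathbf1),x_S)}{\mathsf{SW}(y_j(f\mathbf1,x\mathbf1),x)}\le\frac{(M+1)^2(MN+M+N)(MN+M+N+2)}{(N+1)\big((M^2+M+2)\sqrt{N+1}-2\big)\big((M^2+3M)\sqrt{N+1}+2\big)},\] where the inequalities are tight.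
   Context: Model: $M\ge1$ leaders and $N\ge2$ followers; inverse demand $P(q)=\alpha-\beta q$, $\alpha,\beta>0$; leader marginal cost $C$, follower marginal cost $c$, $c\ge C>0$; follower capacity $k>0$. Leader $i$ produces $x_i\ge0$; follower $j$ takes forward position $f_j\in\mathbb{R}$ and spot production $y_j\in[0,k]$. Given $\mathbf f,\mathbf x$, the spot market is the game among followers where follower $j$ chooses $y_j\in[0,k]$ to maximize $P(\sum_ix_i+\sum_{j'}y_{j'})(y_j-f_j)-cy_j$; its unique Nash equilibrium is $\mathbf y(\mathbf f,\mathbf x)=(y_1(\mathbf f,\mathbf x),\dots,y_N(\mathbf f,\mathbf x))$. Follower $j$'s forward payoff is $(P(\sum_ix_i+\sum_{j'}y_{j'}(\mathbf f,\mathbf x))-c)y_j(\mathbf f,\mathbf x)$, maximized over $f_j\in\mathbb{R}$; leader $i$'s payoff is $\psi_i=(P(\sum_ix_i+\sum_{j'}y_{j'}(\mathbf f,\mathbf x))-C)x_i$, maximized over $x_i\in\mathbb{R}_+$. A Nash equilibrium of the forward market is $(\mathbf f,\mathbf x)$ where no leader or follower can strictly gain by a unilateral deviation; $Q=\{(f,x)\in\mathbb{R}\times\mathbb{R}_+:(f\mathbf1,x\mathbf1)\text{ is a Nash equilibrium}\}$. The symmetric Stackelberg equilibria are $X(0)=\{x\in\mathbb{R}_+:\psi_i(x;x\mathbf1,\mathbf0)\ge\psi_i(\bar x;x\mathbf1,\mathbf0)\ \forall\bar x\in\mathbb{R}_+,\ \forall i\}$, where $\psi_i(\bar x;x\mathbf1,\mathbf0)$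 is leader $i$'s payoff when it produces $\bar x$, the other leaders produce $x$, and all followers' forward positions are $0$. Social welfare of symmetric productions (followers $y$, leaders $x$): $\mathsf{SW}(y,x)=\int_0^{Mx+Ny}P(w)\,dw-(MCx+Ncy)$. $\alpha_x=(\alpha-C)/\beta$, $\triangle C=(c-C)/\beta$. *)

theory Defs
  imports "HOL-Analysis.Analysis"
begin

text \<open>Model parameters are passed explicitly in the order
  al (alpha), be (beta), C (leader cost), c (follower cost), k (capacity),
  M (number of leaders), N (number of followers).
  Leaders are indexed by i < M, followers by j < N; profiles are functions on nat
  (only the entries below M resp. N matter).\<close>

definition invP :: "real \<Rightarrow> real \<Rightarrow> real \<Rightarrow> real" where
  "invP al be q = al - be * q"

definition total :: "nat \<Rightarrow> nat \<Rightarrow> (nat \<Rightarrow> real) \<Rightarrow> (nat \<Rightarrow> real) \<Rightarrow> real" where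
  "total M N x y = (\<Sum>i<M. x i) + (\<Sum>j<N. y j)"

definition spot_payoff ::
  "real \<Rightarrow> real \<Rightarrow> real \<Rightarrow> nat \<Rightarrow> nat \<Rightarrow> (nat \<Rightarrow> real) \<Rightarrow> (nat \<Rightarrow> real) \<Rightarrow> (nat \<Rightarrow> real) \<Rightarrow> nat \<Rightarrow> real" where
  "spot_payoff al be c M N f x y j = invP al be (total M N x y) * (y j - f j) - c * y j"

definition spot_NE ::
  "real \<Rightarrow> real \<Rightarrow> real \<Rightarrow> real \<Rightarrow> nat \<Rightarrow> nat \<Rightarrow> (nat \<Rightarrow> real) \<Rightarrow> (nat \<Rightarrow> real) \<Rightarrow> (nat \<Rightarrow> real) \<Rightarrow> bool" where
  "spot_NE al be c k M N f x y \<longleftrightarrow>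
     (\<forall>j. N \<le> j \<longrightarrow> y j = 0) \<and>
     (\<forall>j<N. 0 \<le> y j \<and> y j \<le> k \<and>
        (\<forall>z. 0 \<le> z \<and> z \<le> k \<longrightarrow>
           spot_payoff al be c M N f x (y(j := z)) j \<le> spot_payoff al be c M N f x y j))"

text \<open>The (unique) spot equilibrium y(f,x).\<close>
definition spot_y ::
  "real \<Rightarrow> real \<Rightarrow> real \<Rightarrow> real \<Rightarrow> nat \<Rightarrow> nat \<Rightarrow> (nat \<Rightarrow> real) \<Rightarrow> (nat \<Rightarrow> real) \<Rightarrow> nat \<Rightarrow> real" where
  "spot_y al be c k M N f x = (THE y. spot_NE al be c k M N f x y)"

definition fwd_payoff ::
  "real \<Rightarrow> real \<Rightarrow> real \<Rightarrow> real \<Rightarrow> nat \<Rightarrow> nat \<Rightarrow> (nat \<Rightarrow> real) \<Rightarrow> (nat \<Rightarrow> real) \<Rightarrow> nat \<Rightarrow> real" where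
  "fwd_payoff al be c k M N f x j =
     (let y = spot_y al be c k M N f x in (invP al be (total M N x y) - c) * y j)"

definition leader_payoff ::
  "real \<Rightarrow> real \<Rightarrow> real \<Rightarrow> real \<Rightarrow> real \<Rightarrow> nat \<Rightarrow> nat \<Rightarrow> (nat \<Rightarrow> real) \<Rightarrow> (nat \<Rightarrow> real) \<Rightarrow> nat \<Rightarrow> real" where
  "leader_payoff al be C c k M N f x i =
     (let y = spot_y al be c k M N f x in (invP al be (total M N x y) - C) * x i)"

definition fwd_NE ::
  "real \<Rightarrow> real \<Rightarrow> real \<Rightarrow> real \<Rightarrow> real \<Rightarrow> nat \<Rightarrow> nat \<Rightarrow> (nat \<Rightarrow> real) \<Rightarrow> (nat \<Rightarrow> real) \<Rightarrow> bool" where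
  "fwd_NE al be C c k M N f x \<longleftrightarrow>
     (\<forall>i<M. 0 \<le> x i) \<and>
     (\<forall>j<N. \<forall>f'. fwd_payoff al be c k M N (f(j := f')) x j \<le> fwd_payoff al be c k M N f x j) \<and>
     (\<forall>i<M. \<forall>x'. 0 \<le> x' \<longrightarrow>
        leader_payoff al be C c k M N f (x(i := x')) i \<le> leader_payoff al be C c k M N f x i)"

definition Qset :: "real \<Rightarrow> real \<Rightarrow> real \<Rightarrow> real \<Rightarrow> real \<Rightarrow> nat \<Rightarrow> nat \<Rightarrow> (real \<times> real) set" where
  "Qset al be C c k M N = {(f, x). 0 \<le> x \<and> fwd_NE al be C c k M N (\<lambda>_. f) (\<lambda>_. x)}"

definition X0 :: "real \<Rightarrow> real \<Rightarrow> real \<Rightarrow> real \<Rightarrow> real \<Rightarrow> nat \<Rightarrow> nat \<Rightarrow> real set" where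
  "X0 al be C c k M N = {x. 0 \<le> x \<and> (\<forall>i<M. \<forall>xb. 0 \<le> xb \<longrightarrow>
      leader_payoff al be C c k M N (\<lambda>_. 0) ((\<lambda>_. x)(i := xb)) i
        \<le> leader_payoff al be C c k M N (\<lambda>_. 0) (\<lambda>_. x) i)}"

definition SW :: "real \<Rightarrow> real \<Rightarrow> real \<Rightarrow> real \<Rightarrow> nat \<Rightarrow> nat \<Rightarrow> real \<Rightarrow> real \<Rightarrow> real" where
  "SW al be C c M N y x =
     integral {0 .. real M * x + real N * y} (\<lambda>w. invP al be w) - (real M * C * x + real N * c * y)"

end

theory Submission
  imports Defs "HOL-Analysis.Analysis"
begin



lemma sum_upd: fixes y :: "nat \<Rightarrow> real" assumes "j < N"
  shows "sum (y(j:=z)) {..<N} = sum y {..<N} + (z - y j)"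
proof -
  have f: "finite {..<N}" by simp
  have "sum (y(j:=z)) {..<N} = (y(j:=z)) j + sum (y(j:=z)) ({..<N} - {j})"
    using assms by (subst sum.remove[OF f, of j]) auto
  also have "sum (y(j:=z)) ({..<N} - {j}) = sum y ({..<N} - {j})"
    by (rule sum.cong) auto
  also have "sum y {..<N} = y j + sum y ({..<N} - {j})"
    using assms by (subst sum.remove[OF f, of j]) auto
  ultimately show ?thesis by simp
qed

definition Gs where
  "Gs al be c M N f x y j = al - c - be * total M N x y - be * (y j - f j)"

lemma total_upd: "j < N \<Longrightarrow> total M N x (y(j:=z)) = total M N x y + (z - y j)"
  unfolding total_def using sum_upd by simp

lemma payoff_diff: assumes "j < N"
  shows "spot_payoff al be c M N f x (y(j:=z)) j - spot_payoff al be c M N f x y j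
     = (z - y j) * Gs al be c M N f x y j - be * (z - y j)^2"
  unfolding spot_payoff_def Gs_def invP_def total_upd[OF assms]
  by (simp add: algebra_simps power2_eq_square)

definition VI where
  "VI al be c k M N f x y \<longleftrightarrow> (\<forall>j. N \<le> j \<longrightarrow> y j = 0) \<and>
     (\<forall>j<N. 0 \<le> y j \<and> y j \<le> k \<and> (0 < y j \<longrightarrow> 0 \<le> Gs al be c M N f x y j)
        \<and> (y j < k \<longrightarrow> Gs al be c M N f x y j \<le> 0))"

lemma vi_ineq: fixes g yj z :: real
  assumes "0 \<le> yj" "yj \<le> k" "0 < yj \<longrightarrow> 0 \<le> g" "yj < k \<longrightarrow> g \<le> 0" "0 \<le> z" "z \<le> k"
  shows "(z - yj) * g \<le> 0"
proof (cases "z \<le> yj")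
  case True
  then show ?thesis using assms by (cases "yj = z") (auto intro: mult_nonpos_nonneg)
next
  case False
  then show ?thesis using assms by (auto intro: mult_nonneg_nonpos)
qed

lemma one_dim_nec: fixes g yj :: real
  assumes be: "be > 0" and "0 \<le> yj" "yj \<le> k"
   and opt: "\<And>z. 0 \<le> z \<Longrightarrow> z \<le> k \<Longrightarrow> (z - yj) * g - be * (z - yj)^2 \<le> 0"
  shows "(0 < yj \<longrightarrow> 0 \<le> g) \<and> (yj < k \<longrightarrow> g \<le> 0)"
proof safe
  assume "0 < yj"
  show "0 \<le> g"
  proof (rule ccontr)
    assume "\<not> 0 \<le> g"
    define t where "t = min yj (- g / (2*be))"
    have t0: "t > 0" using \<open>0<yj\<close> \<open>\<not> 0 \<le> g\<close> be by (auto simp: t_def divide_neg_pos divide_pos_pos)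
    have t1: "t \<le> - g / (2*be)" by (simp add: t_def)
    have "t \<le> yj" by (simp add: t_def)
    have "t * (2*be) \<le> (- g / (2*be)) * (2*be)" using t1 be by (intro mult_right_mono) auto
    also have "\<dots> = - g" using be by simp
    finally have "t * (2*be) \<le> - g" .
    hence "be * t \<le> - g/2" by (simp add: algebra_simps)
    hence "t * (-g - be * t) > 0" using t0 \<open>\<not> 0 \<le> g\<close>
      by (intro mult_pos_pos) auto
    moreover have "((yj - t) - yj) * g - be * ((yj - t) - yj)^2 \<le> 0"
      using opt[of "yj - t"] t0 assms \<open>t \<le> yj\<close> by linarith
    ultimately show False by (simp add: algebra_simps power2_eq_square)
  qed
next
  assume "yj < k"
  show "g \<le> 0"
  proof (rule ccontr)
    assume "\<not> g \<le> 0"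
    define t where "t = min (k - yj) (g / (2*be))"
    have t0: "t > 0" using \<open>yj < k\<close> \<open>\<not> g \<le> 0\<close> be by (auto simp: t_def divide_neg_pos divide_pos_pos)
    have t1: "t \<le> g / (2*be)" by (simp add: t_def)
    have "t \<le> k - yj" by (simp add: t_def)
    have "t * (2*be) \<le> g" using t1 be by (simp add: le_divide_eq)
    hence "be * t \<le> g/2" by (simp add: algebra_simps)
    hence "t * (g - be * t) > 0" using t0 \<open>\<not> g \<le> 0\<close>
      by (intro mult_pos_pos) auto
    moreover have "((yj + t) - yj) * g - be * ((yj + t) - yj)^2 \<le> 0"
      using opt[of "yj + t"] t0 assms \<open>t \<le> k - yj\<close> by linarith
    ultimately show False by (simp add: algebra_simps power2_eq_square)
  qed
qed

lemma NE_iff_VI: assumes "be > 0"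
  shows "spot_NE al be c k M N f x y \<longleftrightarrow> VI al be c k M N f x y"
proof
  assume ne: "spot_NE al be c k M N f x y"
  have A1: "\<forall>j. N \<le> j \<longrightarrow> y j = 0" using ne unfolding spot_NE_def by auto
  have A2: "0 \<le> y j \<and> y j \<le> k \<and> (0 < y j \<longrightarrow> 0 \<le> Gs al be c M N f x y j)
        \<and> (y j < k \<longrightarrow> Gs al be c M N f x y j \<le> 0)" if j: "j < N" for j
  proof -
    have b: "0 \<le> y j" "y j \<le> k" using ne j unfolding spot_NE_def by auto
    have "\<And>z. 0 \<le> z \<Longrightarrow> z \<le> k \<Longrightarrow> (z - y j) * Gs al be c M N f x y j - be * (z - y j)^2 \<le> 0"
    proof -
      fix z assume z: "0 \<le> z" "z \<le> k"
      have "spot_payoff al be c M N f x (y(j := z)) j \<le> spot_payoff al be c M N f x y j"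
        using ne j z unfolding spot_NE_def by blast
      thus "(z - y j) * Gs al be c M N f x y j - be * (z - y j)^2 \<le> 0"
        using payoff_diff[OF j, of al be c M f x y z] by linarith
    qed
    from one_dim_nec[OF assms b this]
    show ?thesis using b by auto
  qed
  show "VI al be c k M N f x y" unfolding VI_def using A1 A2 by blast
next
  assume vi: "VI al be c k M N f x y"
  have B2: "0 \<le> y j \<and> y j \<le> k \<and> (\<forall>z. 0 \<le> z \<and> z \<le> k \<longrightarrow>
           spot_payoff al be c M N f x (y(j := z)) j \<le> spot_payoff al be c M N f x y j)" if j: "j < N" for j
  proof -
    show "0 \<le> y j \<and> y j \<le> k \<and> (\<forall>z. 0 \<le> z \<and> z \<le> k \<longrightarrow>
           spot_payoff al be c M N f x (y(j := z)) j \<le> spot_payoff al be c M N f x y j)"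
    proof -
     have ZZ: "spot_payoff al be c M N f x (y(j := z)) j \<le> spot_payoff al be c M N f x y j"
       if z: "0 \<le> z \<and> z \<le> k" for z
     proof -
      have y1: "0 \<le> y j \<and> y j \<le> k \<and> (0 < y j \<longrightarrow> 0 \<le> Gs al be c M N f x y j)
        \<and> (y j < k \<longrightarrow> Gs al be c M N f x y j \<le> 0)" using vi j unfolding VI_def by blast
      have "(z - y j) * Gs al be c M N f x y j \<le> 0"
        using y1 z vi_ineq[of "y j" k "Gs al be c M N f x y j" z] by blast
      moreover have "be * (z - y j)^2 \<ge> 0" using assms by simp
      ultimately show "spot_payoff al be c M N f x (y(j := z)) j \<le> spot_payoff al be c M N f x y j"
        using payoff_diff[OF j, of al be c M f x y z] by linarith
    qed
    show ?thesis using ZZ vi j unfolding VI_def by blast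
    qed
  qed
  show "spot_NE al be c k M N f x y" unfolding spot_NE_def using B2 vi unfolding VI_def by blast
qed

lemma VI_unique: assumes be: "be > 0" and v1: "VI al be c k M N f x y" and v2: "VI al be c k M N f x y'"
  shows "y = y'"
proof -
  define d where "d = (\<lambda>j. y' j - y j)"
  define D where "D = sum d {..<N}"
  have tot: "total M N x y' = total M N x y + D"
    unfolding total_def D_def d_def by (simp add: sum_subtractf)
  have key: "(D + d j) * d j \<le> 0" if j: "j < N" for j
  proof -
    have y1: "0 \<le> y j \<and> y j \<le> k \<and> (0 < y j \<longrightarrow> 0 \<le> Gs al be c M N f x y j)
        \<and> (y j < k \<longrightarrow> Gs al be c M N f x y j \<le> 0)" using v1 j unfolding VI_def by blast
    have y2: "0 \<le> y' j \<and> y' j \<le> k \<and> (0 < y' j \<longrightarrow> 0 \<le> Gs al be c M N f x y' j)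
        \<and> (y' j < k \<longrightarrow> Gs al be c M N f x y' j \<le> 0)" using v2 j unfolding VI_def by blast
    have a: "(y' j - y j) * Gs al be c M N f x y j \<le> 0"
      using y1 y2 vi_ineq[of "y j" k "Gs al be c M N f x y j" "y' j"] by blast
    have b: "(y j - y' j) * Gs al be c M N f x y' j \<le> 0"
      using y1 y2 vi_ineq[of "y' j" k "Gs al be c M N f x y' j" "y j"] by blast
    have e: "Gs al be c M N f x y j - Gs al be c M N f x y' j = be * (D + d j)"
      unfolding Gs_def tot d_def by (simp add: algebra_simps)
    have "(y' j - y j) * (Gs al be c M N f x y j - Gs al be c M N f x y' j)
       = (y' j - y j) * Gs al be c M N f x y j + (y j - y' j) * Gs al be c M N f x y' j"
      by (simp add: algebra_simps)
    hence "(y' j - y j) * (be * (D + d j)) \<le> 0" using a b by (simp only: e[symmetric])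
    hence "be * ((D + d j) * d j) \<le> 0" unfolding d_def by (simp add: algebra_simps)
    thus ?thesis using be by (simp add: mult_le_0_iff)
  qed
  have "sum (\<lambda>j. (D + d j) * d j) {..<N} \<le> 0" using key by (intro sum_nonpos) auto
  moreover have "sum (\<lambda>j. (D + d j) * d j) {..<N} = D * D + sum (\<lambda>j. (d j)^2) {..<N}"
    by (simp add: distrib_right sum.distrib sum_distrib_left D_def power2_eq_square)
  moreover have "D * D \<ge> 0" by simp
  ultimately have s0: "sum (\<lambda>j. (d j)^2) {..<N} \<le> 0" by linarith
  have "sum (\<lambda>j. (d j)^2) {..<N} = 0" using s0 by (meson antisym sum_nonneg zero_le_power2)
  hence "\<forall>j\<in>{..<N}. (d j)^2 = 0" by (subst (asm) sum_nonneg_eq_0_iff) auto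
  hence "\<And>j. j < N \<Longrightarrow> y j = y' j" unfolding d_def by auto
  moreover have "\<And>j. N \<le> j \<Longrightarrow> y j = y' j" using v1 v2 unfolding VI_def by auto
  ultimately show ?thesis by (metis ext not_le)
qed

lemma spot_y_eq: assumes "be > 0" "VI al be c k M N f x y"
  shows "spot_y al be c k M N f x = y"
  unfolding spot_y_def
proof (rule the_equality)
  show "spot_NE al be c k M N f x y" using assms NE_iff_VI by blast
  fix y' assume "spot_NE al be c k M N f x y'"
  thus "y' = y" using assms NE_iff_VI VI_unique by blast
qed



definition yc :: "nat \<Rightarrow> real \<Rightarrow> nat \<Rightarrow> real" where
  "yc N w = (\<lambda>j. if j < N then w else 0)"

definition clip :: "real \<Rightarrow> real \<Rightarrow> real" where
  "clip k m = max 0 (min k m)"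

lemma sum_yc: "sum (yc N w) {..<N} = real N * w"
  unfolding yc_def by simp

lemma sum_cupd: "i < M \<Longrightarrow> sum ((\<lambda>_. xq)(i:=x')) {..<M} = real M * xq + (x' - xq)"
  using sum_upd[of i M "\<lambda>_. xq" x'] by simp

lemma VI_sym:
  assumes be: "be > 0" and w: "0 \<le> w" "w \<le> k" "0 < w \<longrightarrow> w \<le> m" "w < k \<longrightarrow> m \<le> w"
    and X: "sum x {..<M} = X"
    and mm: "al - c - be * X + be * F = be * (real N + 1) * m"
  shows "VI al be c k M N (\<lambda>_. F) x (yc N w)"
proof -
  have tot: "total M N x (yc N w) = X + real N * w" unfolding total_def X sum_yc by simp
  have G: "Gs al be c M N (\<lambda>_. F) x (yc N w) j = be * (real N + 1) * (m - w)" if "j < N" for j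
    unfolding Gs_def tot using that mm by (simp add: yc_def algebra_simps)
  have p: "be * (real N + 1) > 0" using be by simp
  show ?thesis unfolding VI_def
  proof (intro conjI allI impI)
    fix j assume "N \<le> j" thus "yc N w j = 0" by (simp add: yc_def)
  next
    fix j assume j: "j < N"
    show "0 \<le> yc N w j" "yc N w j \<le> k" using j w by (auto simp: yc_def)
    show "0 < yc N w j \<Longrightarrow> 0 \<le> Gs al be c M N (\<lambda>_. F) x (yc N w) j"
      using G[OF j] j w p by (auto simp: yc_def intro!: mult_nonneg_nonneg)
    show "yc N w j < k \<Longrightarrow> Gs al be c M N (\<lambda>_. F) x (yc N w) j \<le> 0"
      using G[OF j] j w p by (auto simp: yc_def intro!: mult_nonneg_nonpos)
  qed
qed

lemma VI_dev:
  assumes be: "be > 0" and j0: "j0 < N" and v: "0 \<le> v" "v \<le> k" "0 < v \<longrightarrow> v \<le> m" "v < k \<longrightarrow> m \<le> v"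
    and X: "sum x {..<M} = X"
    and mm: "al - c - be * X - be * (real N - 1) * k + be * f' = 2 * be * m"
    and H: "al - c - be * (X + (real N + 1) * k) + be * F \<ge> 0"
  shows "VI al be c k M N ((\<lambda>_. F)(j0 := f')) x ((yc N k)(j0 := v))"
proof -
  have tot: "total M N x ((yc N k)(j0 := v)) = X + real N * k + (v - k)"
    unfolding total_def X sum_upd[OF j0] sum_yc using j0 by (simp add: yc_def)
  have G0: "Gs al be c M N ((\<lambda>_. F)(j0 := f')) x ((yc N k)(j0 := v)) j0 = 2 * be * (m - v)"
    unfolding Gs_def tot using mm by (simp add: algebra_simps)
  have G1: "Gs al be c M N ((\<lambda>_. F)(j0 := f')) x ((yc N k)(j0 := v)) j \<ge> 0" if "j < N" "j \<noteq> j0" for j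
  proof -
    have "Gs al be c M N ((\<lambda>_. F)(j0 := f')) x ((yc N k)(j0 := v)) j
       = (al - c - be * (X + (real N + 1) * k) + be * F) + be * (k - v)"
      unfolding Gs_def tot using that by (simp add: yc_def algebra_simps)
    moreover have "be * (k - v) \<ge> 0" using be v by simp
    ultimately show ?thesis using H by linarith
  qed
  have p: "2 * be > 0" using be by simp
  show ?thesis unfolding VI_def
  proof (intro conjI allI impI)
    fix j assume "N \<le> j" thus "((yc N k)(j0 := v)) j = 0" using j0 by (simp add: yc_def)
  next
    fix j assume j: "j < N"
    show "0 \<le> ((yc N k)(j0 := v)) j" "((yc N k)(j0 := v)) j \<le> k" using j v by (auto simp: yc_def)
    show "0 < ((yc N k)(j0 := v)) j \<Longrightarrow> 0 \<le> Gs al be c M N ((\<lambda>_. F)(j0 := f')) x ((yc N k)(j0 := v)) j"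
    proof (cases "j = j0")
      case True
      then show "0 < ((yc N k)(j0 := v)) j \<Longrightarrow> ?thesis" using G0 v p by (auto intro!: mult_nonneg_nonneg)
    qed (use G1 j in auto)
    show "((yc N k)(j0 := v)) j < k \<Longrightarrow> Gs al be c M N ((\<lambda>_. F)(j0 := f')) x ((yc N k)(j0 := v)) j \<le> 0"
    proof (cases "j = j0")
      case True
      then show "((yc N k)(j0 := v)) j < k \<Longrightarrow> ?thesis" using G0 v p by (auto intro!: mult_nonneg_nonpos)
    qed (use j in \<open>auto simp: yc_def\<close>)
  qed
qed

lemma clip_cases:
  assumes "0 \<le> k"
  obtains "m \<le> 0" "clip k m = 0" | "0 \<le> m" "m \<le> k" "clip k m = m" | "k \<le> m" "clip k m = k"
  using assms unfolding clip_def by (cases "m \<le> 0"; cases "m \<le> k") auto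

lemma clip_props:
  assumes "0 \<le> k"
  shows "0 \<le> clip k m" "clip k m \<le> k" "0 < clip k m \<longrightarrow> clip k m \<le> m" "clip k m < k \<longrightarrow> m \<le> clip k m"
  using assms unfolding clip_def by auto



lemma Q_mem:
  assumes be: "be > 0" and k: "k > 0" and M: "M \<ge> 1" and cC: "c = C"
    and A: "al - C = be * A" and lo: "(real M + real N + 1) * k \<le> A"
  defines "xq \<equiv> (A - real N * k) / (real M + 1)" and "F \<equiv> A + (real N + 1) * k"
  shows "(F, xq) \<in> Qset al be C c k M N"
    and "spot_y al be c k M N (\<lambda>_. F) (\<lambda>_. xq) = yc N k"
proof -
  have M1: "real M + 1 > 0" by simp
  have xqe: "(real M + 1) * xq = A - real N * k" unfolding xq_def using M1 by simp
  have lo2: "A - real N * k \<ge> (real M + 1) * k" using lo by (simp add: algebra_simps)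
  have Mk: "(real M + 1) * k > 0" using k by simp
  have Nk0: "real N * k \<ge> 0" using k by simp
  have A0: "A > 0" using lo2 Mk Nk0 by linarith
  have Nk1: "(real N + 1) * k = real N * k + k" by (simp add: algebra_simps)
  have xq0: "0 \<le> xq" unfolding xq_def using lo2 Mk by (intro divide_nonneg_pos) auto
  have Mxq: "real M * xq + xq = A - real N * k" using xqe by (simp add: algebra_simps)
  have xqk: "xq \<ge> k" using lo Mxq xq0 M
  proof -
    have "(real M + 1) * xq \<ge> (real M + 1) * k" using xqe lo by (simp add: algebra_simps)
    thus ?thesis using M1 by simp
  qed
  have base: "spot_y al be c k M N (\<lambda>_. F) (\<lambda>_. xq) = yc N k"
  proof (rule spot_y_eq[OF be])
    show "VI al be c k M N (\<lambda>_. F) (\<lambda>_. xq) (yc N k)"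
      by (rule VI_sym[OF be, where X = "real M * xq" and m = "(A - real M * xq + F) / (real N + 1)"])
        (use k Mxq xq0 in \<open>auto simp: A cC F_def field_simps\<close>)
  qed
  show "spot_y al be c k M N (\<lambda>_. F) (\<lambda>_. xq) = yc N k" by (rule base)
  have basetot: "total M N (\<lambda>_. xq) (yc N k) = real M * xq + real N * k"
    unfolding total_def sum_yc by simp
  have NE: "fwd_NE al be C c k M N (\<lambda>_. F) (\<lambda>_. xq)"
    unfolding fwd_NE_def
  proof (intro conjI allI impI)
    show "\<And>i. i < M \<Longrightarrow> 0 \<le> xq" using xq0 by simp
  next
    fix j f' assume j: "j < N"
    define m where "m = (A - real M * xq - (real N - 1) * k + f') / 2"
    define v where "v = clip k m"
    have vp: "0 \<le> v" "v \<le> k" "0 < v \<longrightarrow> v \<le> m" "v < k \<longrightarrow> m \<le> v"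
      using clip_props[of k m] k unfolding v_def by auto
    have sy: "spot_y al be c k M N ((\<lambda>_. F)(j := f')) (\<lambda>_. xq) = (yc N k)(j := v)"
    proof (rule spot_y_eq[OF be], rule VI_dev[OF be j vp, where X = "real M * xq"])
      show "sum (\<lambda>_. xq) {..<M} = real M * xq" by simp
      show "al - c - be * (real M * xq) - be * (real N - 1) * k + be * f' = 2 * be * m"
        unfolding m_def using A cC by (simp add: algebra_simps)
      have "real M * xq \<le> A" using Mxq xq0 k by (smt (verit) mult_nonneg_nonneg of_nat_0_le_iff)
      hence "A - (real M * xq + (real N + 1) * k) + F \<ge> 0" unfolding F_def using lo k A0 by simp
      hence "be * (A - (real M * xq + (real N + 1) * k) + F) \<ge> 0" using be by simp
      thus "al - c - be * (real M * xq + (real N + 1) * k) + be * F \<ge> 0"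
        using A cC by (simp add: algebra_simps)
    qed
    have tot: "total M N (\<lambda>_. xq) ((yc N k)(j := v)) = real M * xq + real N * k + (v - k)"
      unfolding total_def sum_upd[OF j] sum_yc using j by (simp add: yc_def)
    define B where "B = A - real M * xq - (real N - 1) * k"
    have B2: "B \<ge> 2 * k" unfolding B_def using Mxq xqk by (simp add: algebra_simps)
    have "(B - v) * v \<le> (B - k) * k"
    proof -
      have "(B - k) * k - (B - v) * v = (k - v) * (B - k - v)" by (simp add: algebra_simps)
      moreover have "(k - v) * (B - k - v) \<ge> 0" using vp B2 by (intro mult_nonneg_nonneg) auto
      ultimately show ?thesis by linarith
    qed
    hence "be * ((B - v) * v) \<le> be * ((B - k) * k)" using be by simp
    thus "fwd_payoff al be c k M N ((\<lambda>_. F)(j := f')) (\<lambda>_. xq) j \<le> fwd_payoff al be c k M N (\<lambda>_. F) (\<lambda>_. xq) j"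
      unfolding fwd_payoff_def Let_def sy base tot basetot invP_def using j A cC
      by (simp add: yc_def B_def algebra_simps)
  next
    fix i and x' :: real assume i: "i < M" and x': "0 \<le> x'"
    define X where "X = real M * xq + (x' - xq)"
    define m where "m = (A - X + F) / (real N + 1)"
    define w where "w = clip k m"
    have wp: "0 \<le> w" "w \<le> k" "0 < w \<longrightarrow> w \<le> m" "w < k \<longrightarrow> m \<le> w"
      using clip_props[of k m] k unfolding w_def by auto
    have sy: "spot_y al be c k M N (\<lambda>_. F) ((\<lambda>_. xq)(i := x')) = yc N w"
    proof (rule spot_y_eq[OF be], rule VI_sym[OF be wp, where X = X])
      show "sum ((\<lambda>_. xq)(i := x')) {..<M} = X" unfolding X_def using sum_cupd[OF i] by simp
      show "al - c - be * X + be * F = be * (real N + 1) * m"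
        unfolding m_def using A cC by (simp add: field_simps)
    qed
    have tot: "total M N ((\<lambda>_. xq)(i := x')) (yc N w) = X + real N * w"
      unfolding total_def sum_yc X_def using sum_cupd[OF i] by simp
    have "(A - X - real N * w) * x' \<le> xq * xq"
    proof (cases "w < k")
      case True
      hence "m \<le> w" using wp by auto
      hence "A - X + F \<le> (real N + 1) * w" unfolding m_def by (simp add: divide_le_eq algebra_simps)
      hence "A - X - real N * w \<le> w - F" by (simp add: algebra_simps)
      also have "\<dots> < 0" unfolding F_def using wp k A0 Nk0 Nk1 by linarith
      finally have "(A - X - real N * w) * x' \<le> 0" using x' by (simp add: mult_nonpos_nonneg)
      thus ?thesis using zero_le_square[of xq] by linarith
    next
      case False
      hence "w = k" using wp by auto
      hence "A - X - real N * w = 2 * xq - x'" unfolding X_def using Mxq by (simp add: algebra_simps)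
      moreover have "(2 * xq - x') * x' \<le> xq * xq"
        using zero_le_power2[of "x' - xq"] by (simp add: power2_eq_square algebra_simps)
      ultimately show ?thesis by simp
    qed
    hence "be * ((A - X - real N * w) * x') \<le> be * (xq * xq)" using be by simp
    moreover have "A - (real M * xq + real N * k) = xq" using Mxq by simp
    ultimately show "leader_payoff al be C c k M N (\<lambda>_. F) ((\<lambda>_. xq)(i := x')) i \<le> leader_payoff al be C c k M N (\<lambda>_. F) (\<lambda>_. xq) i"
      unfolding leader_payoff_def Let_def sy base tot basetot invP_def using i A
      by (simp add: algebra_simps)
  qed
  show "(F, xq) \<in> Qset al be C c k M N" unfolding Qset_def using NE xq0 by simp
qed



lemma X0_mem:
  assumes be: "be > 0" and k: "k > 0" and cC: "c = C"
    and A: "al - C = be * A" and A0: "A > 0"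
    and t1: "t > 1" and tt: "t * t = real N + 1"
    and up: "2 * (t - 1) * A \<le> (real M + 1) * t * real N * k"
  defines "xS \<equiv> A / (real M + 1)"
  shows "xS \<in> X0 al be C c k M N"
    and "spot_y al be c k M N (\<lambda>_. 0) (\<lambda>_. xS) = yc N (xS / (real N + 1))"
proof -
  have M1: "real M + 1 > 0" by simp
  have N1: "real N + 1 > 0" by simp
  have xSe: "(real M + 1) * xS = A" unfolding xS_def using M1 by simp
  have xS0: "xS > 0" unfolding xS_def using A0 by simp
  have MxS: "real M * xS + xS = A" using xSe by (simp add: algebra_simps)
  have Nt: "real N = (t - 1) * (t + 1)" using tt by (simp add: algebra_simps)
  have "2 * (t - 1) * A \<le> (t - 1) * ((real M + 1) * t * (t + 1) * k)"
    using up unfolding Nt by (simp add: algebra_simps)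
  hence "(t - 1) * (2 * A) \<le> (t - 1) * ((real M + 1) * t * (t + 1) * k)" by (simp add: algebra_simps)
  hence "2 * A \<le> (real M + 1) * t * (t + 1) * k" using t1 by (simp add: mult_le_cancel_left)
  also have "\<dots> \<le> (real M + 1) * t * (2 * t) * k" using t1 k by (intro mult_right_mono mult_left_mono) auto
  finally have "A \<le> (real M + 1) * (t * t) * k" by (simp add: algebra_simps)
  hence Aup: "A \<le> (real M + 1) * (real N + 1) * k" using tt by simp
  define w0 where "w0 = xS / (real N + 1)"
  have w0k: "w0 \<le> k"
  proof -
    have "(real M + 1) * xS \<le> (real M + 1) * ((real N + 1) * k)" using xSe Aup by (simp add: algebra_simps)
    hence "xS \<le> (real N + 1) * k" using M1 by simp
    thus ?thesis unfolding w0_def using N1 by (simp add: divide_le_eq algebra_simps)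
  qed
  have w00: "0 \<le> w0" unfolding w0_def using xS0 by simp
  have w0e: "(real N + 1) * w0 = xS" unfolding w0_def using N1 by simp
  have base: "spot_y al be c k M N (\<lambda>_. 0) (\<lambda>_. xS) = yc N w0"
  proof (rule spot_y_eq[OF be])
    show "VI al be c k M N (\<lambda>_. 0) (\<lambda>_. xS) (yc N w0)"
      by (rule VI_sym[OF be, where X = "real M * xS" and m = w0])
        (use w00 w0k MxS w0e in \<open>auto simp: A cC algebra_simps\<close>)
  qed
  show "spot_y al be c k M N (\<lambda>_. 0) (\<lambda>_. xS) = yc N (xS / (real N + 1))" using base w0_def by simp
  have basetot: "total M N (\<lambda>_. xS) (yc N w0) = real M * xS + real N * w0"
    unfolding total_def sum_yc by simp
  have basem: "A - (real M * xS + real N * w0) = w0" using MxS w0e by (simp add: algebra_simps)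
  have dev: "leader_payoff al be C c k M N (\<lambda>_. 0) ((\<lambda>_. xS)(i := xb)) i
        \<le> leader_payoff al be C c k M N (\<lambda>_. 0) (\<lambda>_. xS) i" if i: "i < M" and xb: "0 \<le> xb" for i xb
  proof -
    define X where "X = real M * xS + (xb - xS)"
    define m where "m = (A - X) / (real N + 1)"
    define w where "w = clip k m"
    have wp: "0 \<le> w" "w \<le> k" "0 < w \<longrightarrow> w \<le> m" "w < k \<longrightarrow> m \<le> w"
      using clip_props[of k m] k unfolding w_def by auto
    have me: "(real N + 1) * m = A - X" unfolding m_def using N1 by simp
    have sy: "spot_y al be c k M N (\<lambda>_. 0) ((\<lambda>_. xS)(i := xb)) = yc N w"
    proof (rule spot_y_eq[OF be], rule VI_sym[OF be wp, where X = X])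
      show "sum ((\<lambda>_. xS)(i := xb)) {..<M} = X" unfolding X_def using sum_cupd[OF i] by simp
      show "al - c - be * X + be * 0 = be * (real N + 1) * m"
        using arg_cong[OF me, of "\<lambda>u. be * u"] A cC by (simp add: algebra_simps)
    qed
    have tot: "total M N ((\<lambda>_. xS)(i := xb)) (yc N w) = X + real N * w"
      unfolding total_def sum_yc X_def using sum_cupd[OF i] by simp
    have AX: "A - X = 2 * xS - xb" unfolding X_def using MxS by (simp add: algebra_simps)
    have key: "(real N + 1) * ((A - X - real N * w) * xb) \<le> xS * xS"
    proof (cases rule: clip_cases[of k m])
      show "0 \<le> k" using k by simp
    next
      assume "m \<le> 0" "clip k m = 0"
      hence "w = 0" using w_def by simp
      have "(real N + 1) * m \<le> 0" using \<open>m \<le> 0\<close> N1 by (simp add: mult_nonneg_nonpos)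
      hence "A - X \<le> 0" using me by simp
      hence "(A - X - real N * w) * xb \<le> 0" using xb \<open>w = 0\<close> by (simp add: mult_nonpos_nonneg)
      thus ?thesis using N1 zero_le_square[of xS] by (smt (verit) mult_nonneg_nonpos)
    next
      assume "0 \<le> m" "m \<le> k" "clip k m = m"
      hence "w = m" using w_def by simp
      hence "A - X - real N * w = m" using me by (simp add: algebra_simps)
      hence "(real N + 1) * ((A - X - real N * w) * xb) = (A - X) * xb"
        using me by (simp add: mult.assoc[symmetric])
      also have "\<dots> = (2 * xS - xb) * xb" using AX by simp
      also have "\<dots> \<le> xS * xS" using zero_le_power2[of "xb - xS"] by (simp add: power2_eq_square algebra_simps)
      finally show ?thesis .
    next
      assume "k \<le> m" "clip k m = k"
      hence "w = k" using w_def by simp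
      define B where "B = 2 * xS - real N * k"
      have e: "A - X - real N * w = B - xb" unfolding B_def using AX \<open>w = k\<close> by simp
      show ?thesis
      proof (cases "B \<le> 0")
        case True
        hence "(B - xb) * xb \<le> 0" using xb by (simp add: mult_nonpos_nonneg)
        thus ?thesis unfolding e using N1 zero_le_square[of xS] by (smt (verit) mult_nonneg_nonpos)
      next
        case False
        have amgm: "(B - xb) * xb \<le> B * B / 4" using zero_le_power2[of "B - 2*xb"] by (simp add: power2_eq_square algebra_simps)
        have "t * B \<le> 2 * xS"
        proof -
          have u: "2 * (t - 1) * ((real M + 1) * xS) \<le> (real M + 1) * t * real N * k"
            using up xSe by simp
          have "(real M + 1) * (2 * (t - 1) * xS) \<le> (real M + 1) * (t * real N * k)"
            using u by (simp only: mult_ac)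
          hence "2 * (t - 1) * xS \<le> t * real N * k" using M1 mult_le_cancel_left_pos by blast
          thus ?thesis unfolding B_def by (simp add: algebra_simps)
        qed
        note h = this
        have tB0: "0 \<le> t * B" using False t1 by simp
        have "(t * B) * (t * B) \<le> (2 * xS) * (2 * xS)"
          using mult_mono[OF h h] tB0 xS0 by simp
        hence "(real N + 1) * (B * B) \<le> 4 * (xS * xS)" using tt by (simp add: algebra_simps)
        note q = this
        have "(real N + 1) * ((B - xb) * xb) \<le> (real N + 1) * (B * B / 4)"
          using amgm N1 by (intro mult_left_mono) auto
        also have "\<dots> = ((real N + 1) * (B * B)) / 4" by simp
        also have "\<dots> \<le> xS * xS" using q by simp
        finally show ?thesis unfolding e .
      qed
    qed
    have "be * ((A - X - real N * w) * xb) \<le> be * (w0 * xS)"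
    proof -
      have "(real N + 1) * ((A - X - real N * w) * xb) \<le> (real N + 1) * (w0 * xS)"
        using key w0e by (metis mult.assoc)
      hence "(A - X - real N * w) * xb \<le> w0 * xS" using N1 by simp
      thus ?thesis using be by simp
    qed
    thus ?thesis
      unfolding leader_payoff_def Let_def sy base tot basetot invP_def using i A basem
      by (simp add: algebra_simps)
  qed
  show "xS \<in> X0 al be C c k M N" unfolding X0_def using dev xS0 by auto
qed



lemma integral_lin: assumes "0 \<le> T"
  shows "integral {0..T} (\<lambda>w. invP al be w) = al * T - be * T^2 / 2"
proof -
  have "((\<lambda>w. invP al be w) has_integral ((\<lambda>w. al * w - be * w^2 / 2) T - (\<lambda>w. al * w - be * w^2 / 2) 0)) {0..T}"
  proof (rule fundamental_theorem_of_calculus[OF assms])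
    fix x :: real assume "x \<in> {0..T}"
    show "((\<lambda>w. al * w - be * w^2 / 2) has_vector_derivative invP al be x) (at x within {0..T})"
      unfolding invP_def has_real_derivative_iff_has_vector_derivative[symmetric]
      by (auto intro!: derivative_eq_intros)
  qed
  thus ?thesis by (simp add: integral_unique)
qed

lemma SW_eq: assumes "0 \<le> real M * x + real N * y" and "al - C = be * A"
  shows "SW al be C C M N y x = be * (A * (real M * x + real N * y) - (real M * x + real N * y)^2 / 2)"
  unfolding SW_def integral_lin[OF assms(1)]
  using assms(2) by (simp add: algebra_simps power2_eq_square)



lemma arith_core:
  fixes A k t m n :: real
  assumes m: "m \<ge> 1" and n: "n \<ge> 2" and k: "k > 0" and t1: "t > 1" and tt: "t * t = n + 1"
    and lo: "(m + n + 1) * k \<le> A" and up: "2 * (t - 1) * A \<le> (m + 1) * t * n * k"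
  defines "TQ \<equiv> m * ((A - n * k) / (m + 1)) + n * k"
    and "TS \<equiv> m * (A / (m + 1)) + n * ((A / (m + 1)) / (n + 1))"
    and "K \<equiv> m * n + m + n"
    and "d1 \<equiv> m * (m + 1) * (n + 1) + 2 * (n + 1 - t)"
    and "P1 \<equiv> (m^2 + m + 2) * t - 2" and "P2 \<equiv> (m^2 + 3 * m) * t + 2"
  shows "(m + 1) * TQ = m * A + n * k" and "(m + 1) * (n + 1) * TS = A * K"
    and "0 < TQ" and "TQ < TS" and "TS < A" and "0 < d1" and "0 < P1" and "0 < P2"
    and "A * d1 \<le> (m + 1) * (n + 1) * (m * A + n * k)"
    and "A^2 * (P1 * P2) \<le> (m + 1)^2 * (n + 1) * ((m * A + n * k) * ((m + 2) * A - n * k))"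
proof -
  have m1: "m + 1 > 0" "n + 1 > 0" using m n by auto
  have nz: "m + 1 \<noteq> 0" "n + 1 \<noteq> 0" "1 + m \<noteq> 0" "1 + n \<noteq> 0" using m n by auto
  show TQe: "(m + 1) * TQ = m * A + n * k" unfolding TQ_def using nz by (simp add: field_simps)
  show TSe: "(m + 1) * (n + 1) * TS = A * K"
  proof -
    define b where "b = (A / (m + 1)) / (n + 1)"
    have a: "A / (m + 1) = (n + 1) * b" unfolding b_def using nz(2) by simp
    have Ab: "A = (m + 1) * ((n + 1) * b)" using a nz by (simp add: field_simps)
    have "TS = m * ((n + 1) * b) + n * b" unfolding TS_def a b_def[symmetric] using nz(2) by simp
    thus ?thesis unfolding K_def by (subst Ab) (simp add: algebra_simps)
  qed
  have nk: "n * k > 0" using n k by simp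
  have "(m + n + 1) * k = m * k + (n + 1) * k" by (simp add: algebra_simps)
  moreover have "m * k > 0" using m k by simp
  ultimately have A0: "A > (n + 1) * k" using lo by linarith
  have Ank: "A > n * k" using A0 k by (simp add: algebra_simps)
  have "m * A > 0" using m Ank nk by simp
  hence "(m + 1) * TQ > 0" using TQe nk by simp
  thus "0 < TQ" using m1 by (simp add: zero_less_mult_iff)
  have "(m + 1) * (n + 1) * TQ < (m + 1) * (n + 1) * TS"
  proof -
    have "(m + 1) * (n + 1) * TQ = (n + 1) * ((m + 1) * TQ)" by (simp add: algebra_simps)
    also have "\<dots> = (n + 1) * (m * A + n * k)" using TQe by simp
    also have "\<dots> < A * K"
    proof -
      have "n * ((n + 1) * k) < n * A" using A0 n by simp
      thus ?thesis unfolding K_def by (simp add: algebra_simps)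
    qed
    finally show ?thesis using TSe by simp
  qed
  thus "TQ < TS" using m1 by simp
  have AA: "A > 0" using Ank nk by simp
  have "(m + 1) * (n + 1) * A = A * K + A" unfolding K_def by (simp add: algebra_simps)
  hence "(m + 1) * (n + 1) * TS < (m + 1) * (n + 1) * A" using TSe AA by simp
  thus "TS < A" using m1 by simp
  have tpos: "t * (t - 1) > 0" using t1 by simp
  have nt: "n + 1 - t = t * (t - 1)" using tt by (simp add: algebra_simps)
  show "0 < d1" unfolding d1_def nt using tpos m1 m n t1 by (intro add_pos_pos mult_pos_pos) auto
  have "m * m \<ge> 1 * 1" using m by (intro mult_mono) auto
  hence mm: "m^2 + m + 2 \<ge> 4" using m by (simp add: power2_eq_square)
  have "(m^2 + m + 2) * t \<ge> 4 * t" using mm t1 by (intro mult_right_mono) auto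
  hence "(m^2 + m + 2) * t > 4" using t1 by linarith
  thus "0 < P1" unfolding P1_def by simp
  have "(m^2 + 3*m) * t > 0" using m t1 mm by (intro mult_pos_pos) auto
  thus "0 < P2" unfolding P2_def by simp
  show "A * d1 \<le> (m + 1) * (n + 1) * (m * A + n * k)"
  proof -
    have "t * (2 * (t - 1) * A) \<le> t * ((m + 1) * t * n * k)" using up t1 by simp
    hence "A * (2 * (n + 1 - t)) \<le> (m + 1) * (n + 1) * (n * k)"
      unfolding nt tt[symmetric] by (simp add: algebra_simps)
    thus ?thesis unfolding d1_def by (simp add: algebra_simps)
  qed
  define p where "p = (m + 1) * t * (n * k)"
  define q where "q = 2 * (t - 1) * A"
  have pq: "p - q \<ge> 0" unfolding p_def q_def using up by (simp add: algebra_simps)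
  have sec: "2 * A * (m + 1) * t - p - q \<ge> 0"
  proof -
    have "2 * A - n * k \<ge> A" using Ank by simp
    hence "(m + 1) * t * (2 * A - n * k) \<ge> (m + 1) * t * A" using m1 t1 by (intro mult_left_mono) auto
    moreover have "(m + 1) * t * A \<ge> 2 * t * A" using m t1 Ank nk by (intro mult_right_mono) auto
    moreover have "2 * t * A \<ge> 2 * (t - 1) * A" using Ank nk by simp
    ultimately show ?thesis unfolding p_def q_def by (simp add: algebra_simps)
  qed
  have P12: "P1 * P2 = (m + 1)^2 * m * (m + 2) * t^2 + 4 * (m + 1) * t * (t - 1) - 4 * (t - 1)^2"
    unfolding P1_def P2_def by (simp add: algebra_simps power2_eq_square)
  have ident: "(m + 1)^2 * (t * t) * ((m * A + n * k) * ((m + 2) * A - n * k)) - A^2 * (P1 * P2)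
      = (p - q) * (2 * A * (m + 1) * t - p - q)"
    unfolding P12 p_def q_def by (simp add: algebra_simps power2_eq_square)
  have "(p - q) * (2 * A * (m + 1) * t - p - q) \<ge> 0" using pq sec by simp
  thus "A^2 * (P1 * P2) \<le> (m + 1)^2 * (n + 1) * ((m * A + n * k) * ((m + 2) * A - n * k))"
    using ident tt by simp
qed



lemma ratio1:
  fixes A k m n TQ TS K d1 :: real
  assumes TQe: "(m + 1) * TQ = m * A + n * k" and TSe: "(m + 1) * (n + 1) * TS = A * K"
    and pos: "TQ > 0" "d1 > 0" "K > 0" "m + 1 > 0" "n + 1 > 0"
  shows "A * d1 \<le> (m + 1) * (n + 1) * (m * A + n * k) \<Longrightarrow> TS / TQ \<le> K * (m + 1) / d1"
    and "A * d1 = (m + 1) * (n + 1) * (m * A + n * k) \<Longrightarrow> TS / TQ = K * (m + 1) / d1"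
proof -
  have L0: "((m + 1) * (n + 1)) * (TS * d1) = (A * K) * d1" unfolding TSe[symmetric] by (simp add: mult_ac)
  have L: "((m + 1) * (n + 1)) * (TS * d1) = K * (A * d1)" using L0 by (simp add: mult_ac)
  have R0: "((m + 1) * (n + 1)) * (K * (m + 1) * TQ) = K * (n + 1) * (m + 1) * ((m + 1) * TQ)" by (simp add: mult_ac)
  have R: "((m + 1) * (n + 1)) * (K * (m + 1) * TQ) = K * ((m + 1) * (n + 1) * (m * A + n * k))"
    using R0 unfolding TQe by (simp add: mult_ac)
  have mn: "(m + 1) * (n + 1) > 0" using pos by simp
  assume h: "A * d1 \<le> (m + 1) * (n + 1) * (m * A + n * k)"
  have "K * (A * d1) \<le> K * ((m + 1) * (n + 1) * (m * A + n * k))" using h pos by simp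
  hence "TS * d1 \<le> K * (m + 1) * TQ" using L R mn by (metis mult_le_cancel_left_pos)
  thus "TS / TQ \<le> K * (m + 1) / d1" using pos by (simp add: divide_le_eq le_divide_eq field_simps)
next
  have L0: "((m + 1) * (n + 1)) * (TS * d1) = (A * K) * d1" unfolding TSe[symmetric] by (simp add: mult_ac)
  have L: "((m + 1) * (n + 1)) * (TS * d1) = K * (A * d1)" using L0 by (simp add: mult_ac)
  have R0: "((m + 1) * (n + 1)) * (K * (m + 1) * TQ) = K * (n + 1) * (m + 1) * ((m + 1) * TQ)" by (simp add: mult_ac)
  have R: "((m + 1) * (n + 1)) * (K * (m + 1) * TQ) = K * ((m + 1) * (n + 1) * (m * A + n * k))"
    using R0 unfolding TQe by (simp add: mult_ac)
  have mn: "(m + 1) * (n + 1) > 0" using pos by simp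
  assume h: "A * d1 = (m + 1) * (n + 1) * (m * A + n * k)"
  hence "TS * d1 = K * (m + 1) * TQ" using L R mn by (metis mult_cancel_left less_irrefl)
  thus "TS / TQ = K * (m + 1) / d1" using pos by (simp add: field_simps)
qed



lemma ratio2:
  fixes A k m n TQ TS K P1 P2 be :: real
  assumes TQe: "(m + 1) * TQ = m * A + n * k" and TSe: "(m + 1) * (n + 1) * TS = A * K"
    and pos: "TQ > 0" "TQ < A" "K > 0" "m + 1 > 0" "n + 1 > 0" "P1 > 0" "P2 > 0" "be > 0"
    and Kd: "2 * ((m + 1) * (n + 1)) = K + K + 2"
  defines "SS \<equiv> A * TS - TS^2 / 2" and "SQ \<equiv> A * TQ - TQ^2 / 2"
    and "LL \<equiv> A^2 * (P1 * P2)" and "RR \<equiv> (m + 1)^2 * (n + 1) * ((m * A + n * k) * ((m + 2) * A - n * k))"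
  shows "LL \<le> RR \<Longrightarrow> (be * SS) / (be * SQ) \<le> (m + 1)^2 * K * (K + 2) / ((n + 1) * P1 * P2)"
    and "LL = RR \<Longrightarrow> (be * SS) / (be * SQ) = (m + 1)^2 * K * (K + 2) / ((n + 1) * P1 * P2)"
proof -
  define W where "W = 2 * (m + 1)^2 * (n + 1)^2"
  define Z where "Z = K * (K + 2) * (n + 1)"
  define d2 where "d2 = (n + 1) * P1 * P2"
  define c2 where "c2 = (m + 1)^2 * K * (K + 2)"
  have Wp: "W > 0" unfolding W_def using pos by simp
  have Zp: "Z > 0" unfolding Z_def using pos by simp
  have d2p: "d2 > 0" unfolding d2_def using pos by simp
  have SQp: "SQ > 0"
  proof -
    have "SQ = TQ * (2 * A - TQ) / 2" unfolding SQ_def by (simp add: power2_eq_square algebra_simps)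
    moreover have "TQ * (2 * A - TQ) > 0" using pos by (intro mult_pos_pos) auto
    ultimately show ?thesis by simp
  qed
  have q1: "2 * (m + 1)^2 * SQ = 2 * (m + 1) * A * ((m + 1) * TQ) - ((m + 1) * TQ)^2"
    unfolding SQ_def by (simp add: algebra_simps power2_eq_square)
  have q2: "2 * (m + 1)^2 * SQ = (m * A + n * k) * ((m + 2) * A - n * k)"
    unfolding q1 TQe by (simp add: algebra_simps power2_eq_square)
  have s1: "2 * ((m + 1) * (n + 1))^2 * SS = 2 * ((m + 1) * (n + 1)) * A * ((m + 1) * (n + 1) * TS) - ((m + 1) * (n + 1) * TS)^2"
    unfolding SS_def by (simp add: algebra_simps power2_eq_square)
  have s2: "2 * ((m + 1) * (n + 1))^2 * SS = A^2 * K * (K + 2)"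
    unfolding s1 TSe Kd by (simp add: algebra_simps power2_eq_square)
  have e1: "W * (SS * d2) = Z * LL"
  proof -
    have "W * (SS * d2) = (2 * ((m + 1) * (n + 1))^2 * SS) * d2" unfolding W_def by (simp add: power_mult_distrib mult_ac)
    also have "\<dots> = Z * LL" unfolding s2 Z_def LL_def d2_def by (simp add: mult_ac power2_eq_square)
    finally show ?thesis .
  qed
  have e2: "W * (c2 * SQ) = Z * RR"
  proof -
    have "W * (c2 * SQ) = (2 * (m + 1)^2 * SQ) * c2 * (n + 1)^2" unfolding W_def by (simp add: mult_ac)
    also have "\<dots> = Z * RR" unfolding q2 Z_def RR_def c2_def by (simp add: mult_ac power2_eq_square)
    finally show ?thesis .
  qed
  have bb: "(be * SS) / (be * SQ) = SS / SQ" using pos by simp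
  {
    assume "LL \<le> RR"
    hence "Z * LL \<le> Z * RR" using Zp by simp
    hence "W * (SS * d2) \<le> W * (c2 * SQ)" using e1 e2 by simp
    hence "SS * d2 \<le> c2 * SQ" using Wp by simp
    hence "SS / SQ \<le> c2 / d2" using SQp d2p by (simp add: divide_le_eq le_divide_eq field_simps)
    thus "(be * SS) / (be * SQ) \<le> (m + 1)^2 * K * (K + 2) / ((n + 1) * P1 * P2)"
      unfolding bb c2_def d2_def .
  }
  {
    assume "LL = RR"
    hence "W * (SS * d2) = W * (c2 * SQ)" using e1 e2 by simp
    hence "SS * d2 = c2 * SQ" using Wp by simp
    hence "SS / SQ = c2 / d2" using SQp d2p by (simp add: field_simps)
    thus "(be * SS) / (be * SQ) = (m + 1)^2 * K * (K + 2) / ((n + 1) * P1 * P2)"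
      unfolding bb c2_def d2_def .
  }
qed



lemma arith_eq:
  fixes A k t m n :: real
  assumes t1: "t > 1" and tt: "t * t = n + 1"
    and up: "2 * (t - 1) * A = (m + 1) * t * n * k"
  defines "d1 \<equiv> m * (m + 1) * (n + 1) + 2 * (n + 1 - t)"
    and "P1 \<equiv> (m^2 + m + 2) * t - 2" and "P2 \<equiv> (m^2 + 3 * m) * t + 2"
  shows "A * d1 = (m + 1) * (n + 1) * (m * A + n * k)"
    and "A^2 * (P1 * P2) = (m + 1)^2 * (n + 1) * ((m * A + n * k) * ((m + 2) * A - n * k))"
proof -
  have nt: "n + 1 - t = t * (t - 1)" using tt by (simp add: algebra_simps)
  have "t * (2 * (t - 1) * A) = t * ((m + 1) * t * n * k)" using up by simp
  hence "A * (2 * (n + 1 - t)) = (m + 1) * (n + 1) * (n * k)"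
    unfolding nt tt[symmetric] by (simp add: algebra_simps)
  thus "A * d1 = (m + 1) * (n + 1) * (m * A + n * k)" unfolding d1_def by (simp add: algebra_simps)
  define p where "p = (m + 1) * t * (n * k)"
  define q where "q = 2 * (t - 1) * A"
  have pq: "p - q = 0" unfolding p_def q_def using up by (simp add: algebra_simps)
  have P12: "P1 * P2 = (m + 1)^2 * m * (m + 2) * t^2 + 4 * (m + 1) * t * (t - 1) - 4 * (t - 1)^2"
    unfolding P1_def P2_def by (simp add: algebra_simps power2_eq_square)
  have ident: "(m + 1)^2 * (t * t) * ((m * A + n * k) * ((m + 2) * A - n * k)) - A^2 * (P1 * P2)
      = (p - q) * (2 * A * (m + 1) * t - p - q)"
    unfolding P12 p_def q_def by (simp add: algebra_simps power2_eq_square)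
  thus "A^2 * (P1 * P2) = (m + 1)^2 * (n + 1) * ((m * A + n * k) * ((m + 2) * A - n * k))"
    using pq tt by simp
qed

lemma setup_all:
  fixes al be C k A t :: real and M N :: nat
  assumes M: "M \<ge> 1" and N: "N \<ge> 2" and be: "be > 0" and k: "k > 0"
    and A: "al - C = be * A" and lo: "(real M + real N + 1) * k \<le> A"
    and up: "2 * (t - 1) * A \<le> (real M + 1) * t * real N * k"
    and t1: "t > 1" and tt: "t * t = real N + 1"
  defines "xq \<equiv> (A - real N * k) / (real M + 1)" and "F \<equiv> A + (real N + 1) * k"
    and "xS \<equiv> A / (real M + 1)"
  shows "(F, xq) \<in> Qset al be C C k M N" "xS \<in> X0 al be C C k M N"
    "\<And>j. j < N \<Longrightarrow> spot_y al be C k M N (\<lambda>_. F) (\<lambda>_. xq) j = k"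
    "\<And>j. j < N \<Longrightarrow> spot_y al be C k M N (\<lambda>_. 0) (\<lambda>_. xS) j = xS / (real N + 1)"
    "SW al be C C M N k xq = be * (A * (real M * xq + real N * k) - (real M * xq + real N * k)^2 / 2)"
    "SW al be C C M N (xS / (real N + 1)) xS = be * (A * (real M * xS + real N * (xS / (real N + 1)))
        - (real M * xS + real N * (xS / (real N + 1)))^2 / 2)"
proof -
  have A0: "A > 0"
  proof -
    have "(real M + real N + 1) * k > 0" using k by simp
    thus ?thesis using lo by simp
  qed
  show "(F, xq) \<in> Qset al be C C k M N"
    using Q_mem(1)[OF be k M refl A lo] unfolding xq_def F_def .
  have sq: "spot_y al be C k M N (\<lambda>_. F) (\<lambda>_. xq) = yc N k"
    using Q_mem(2)[OF be k M refl A lo] unfolding xq_def F_def .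
  thus "\<And>j. j < N \<Longrightarrow> spot_y al be C k M N (\<lambda>_. F) (\<lambda>_. xq) j = k" by (simp add: yc_def)
  show "xS \<in> X0 al be C C k M N"
    using X0_mem(1)[OF be k refl A A0 t1 tt up] unfolding xS_def .
  have sx: "spot_y al be C k M N (\<lambda>_. 0) (\<lambda>_. xS) = yc N (xS / (real N + 1))"
    using X0_mem(2)[OF be k refl A A0 t1 tt up] unfolding xS_def .
  thus "\<And>j. j < N \<Longrightarrow> spot_y al be C k M N (\<lambda>_. 0) (\<lambda>_. xS) j = xS / (real N + 1)" by (simp add: yc_def)
  have Mr: "real M \<ge> 1" using M by simp
  have Nr: "real N \<ge> 2" using N by simp
  note core = arith_core[OF Mr Nr k t1 tt lo up]
  have TQ0: "0 \<le> real M * xq + real N * k"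
    using core(3) unfolding xq_def by simp
  show "SW al be C C M N k xq = be * (A * (real M * xq + real N * k) - (real M * xq + real N * k)^2 / 2)"
    by (rule SW_eq[OF TQ0 A])
  have TS0: "0 \<le> real M * xS + real N * (xS / (real N + 1))"
    unfolding xS_def using A0 by simp
  show "SW al be C C M N (xS / (real N + 1)) xS = be * (A * (real M * xS + real N * (xS / (real N + 1)))
        - (real M * xS + real N * (xS / (real N + 1)))^2 / 2)"
    by (rule SW_eq[OF TS0 A])
qed



lemma part1:
  fixes al be C k A t :: real and M N :: nat
  assumes M: "M \<ge> 1" and N: "N \<ge> 2" and be: "be > 0" and k: "k > 0"
    and A: "al - C = be * A" and lo: "(real M + real N + 1) * k \<le> A"
    and up: "2 * (t - 1) * A \<le> (real M + 1) * t * real N * k"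
    and t1: "t > 1" and tt: "t * t = real N + 1"
  shows "\<exists>(f, x) \<in> Qset al be C C k M N. \<exists>xS \<in> X0 al be C C k M N.
        \<forall>j<N.
        (let y = spot_y al be C k M N (\<lambda>_. f) (\<lambda>_. x) j;
             yS = spot_y al be C k M N (\<lambda>_. 0) (\<lambda>_. xS) j in
          real M * x + real N * y < real M * xS + real N * yS \<and>
          SW al be C C M N y x < SW al be C C M N yS xS \<and>
          (real M * xS + real N * yS) / (real M * x + real N * y)
            \<le> (real M * real N + real M + real N) * (real M + 1) /
               (real M * (real M + 1) * (real N + 1) + 2 * (real N + 1 - t)) \<and>
          SW al be C C M N yS xS / SW al be C C M N y x
            \<le> (real M + 1)^2 * (real M * real N + real M + real N) * (real M * real N + real M + real N + 2) /
               ((real N + 1) * ((real M^2 + real M + 2) * t - 2) *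
                ((real M^2 + 3 * real M) * t + 2)))"
proof -
  define xq where "xq = (A - real N * k) / (real M + 1)"
  define F where "F = A + (real N + 1) * k"
  define xS where "xS = A / (real M + 1)"
  note S = setup_all[OF M N be k A lo up t1 tt, folded xq_def F_def xS_def]
  have Mr: "real M \<ge> 1" using M by simp
  have Nr: "real N \<ge> 2" using N by simp
  note core = arith_core[OF Mr Nr k t1 tt lo up, folded xq_def xS_def]
  define TQ where "TQ = real M * xq + real N * k"
  define TS where "TS = real M * xS + real N * (xS / (real N + 1))"
  define K where "K = real M * real N + real M + real N"
  have TQe: "(real M + 1) * TQ = real M * A + real N * k" using core(1) unfolding TQ_def .
  have TSe: "(real M + 1) * (real N + 1) * TS = A * K" using core(2) unfolding TS_def K_def .
  have TQp: "0 < TQ" using core(3) unfolding TQ_def .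
  have TQS: "TQ < TS" using core(4) unfolding TQ_def TS_def .
  have TSA: "TS < A" using core(5) unfolding TS_def .
  have "real M * real N \<ge> 0" by simp
  hence Kp: "K > 0" unfolding K_def using Mr Nr by linarith
  have mp: "real M + 1 > 0" "real N + 1 > 0" by auto
  have r1: "TS / TQ \<le> K * (real M + 1) / (real M * (real M + 1) * (real N + 1) + 2 * (real N + 1 - t))"
    by (rule ratio1(1)[OF TQe TSe TQp core(6) Kp mp core(9)])
  have Kd: "2 * ((real M + 1) * (real N + 1)) = K + K + 2" unfolding K_def by (simp add: algebra_simps)
  have r2: "(be * (A * TS - TS^2 / 2)) / (be * (A * TQ - TQ^2 / 2)) \<le> (real M + 1)^2 * K * (K + 2) /
      ((real N + 1) * ((real M^2 + real M + 2) * t - 2) * ((real M^2 + 3 * real M) * t + 2))"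
    by (rule ratio2(1)[OF TQe TSe TQp _ Kp mp core(7) core(8) be Kd core(10)]) (use TQS TSA in simp)
  have sw: "be * (A * TQ - TQ^2 / 2) < be * (A * TS - TS^2 / 2)"
  proof -
    have "(A * TS - TS^2 / 2) - (A * TQ - TQ^2 / 2) = (TS - TQ) * (2 * A - TS - TQ) / 2"
      by (simp add: algebra_simps power2_eq_square)
    moreover have "(TS - TQ) * (2 * A - TS - TQ) > 0" using TQS TSA TQp by (intro mult_pos_pos) auto
    ultimately show ?thesis using be by simp
  qed
  have SWQ: "SW al be C C M N k xq = be * (A * TQ - TQ^2 / 2)" using S(5) unfolding TQ_def .
  have SWS: "SW al be C C M N (xS / (real N + 1)) xS = be * (A * TS - TS^2 / 2)" using S(6) unfolding TS_def .
  show ?thesis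
  proof (rule bexI[OF _ S(1)], simp only: prod.case, rule bexI[OF _ S(2)], intro allI impI)
    fix j assume j: "j < N"
    show "let y = spot_y al be C k M N (\<lambda>_. F) (\<lambda>_. xq) j;
             yS = spot_y al be C k M N (\<lambda>_. 0) (\<lambda>_. xS) j in
          real M * xq + real N * y < real M * xS + real N * yS \<and>
          SW al be C C M N y xq < SW al be C C M N yS xS \<and>
          (real M * xS + real N * yS) / (real M * xq + real N * y)
            \<le> (real M * real N + real M + real N) * (real M + 1) /
               (real M * (real M + 1) * (real N + 1) + 2 * (real N + 1 - t)) \<and>
          SW al be C C M N yS xS / SW al be C C M N y xq
            \<le> (real M + 1)^2 * (real M * real N + real M + real N) * (real M * real N + real M + real N + 2) /
               ((real N + 1) * ((real M^2 + real M + 2) * t - 2) *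
                ((real M^2 + 3 * real M) * t + 2))"
      unfolding Let_def S(3)[OF j] S(4)[OF j] SWQ SWS
      using TQS sw r1 r2 unfolding TQ_def TS_def K_def by blast
  qed
qed



lemma part_eq:
  fixes al be C k A t :: real and M N :: nat
  assumes M: "M \<ge> 1" and N: "N \<ge> 2" and be: "be > 0" and k: "k > 0"
    and A: "al - C = be * A" and lo: "(real M + real N + 1) * k \<le> A"
    and upe: "2 * (t - 1) * A = (real M + 1) * t * real N * k"
    and t1: "t > 1" and tt: "t * t = real N + 1"
  shows "\<exists>(f, x) \<in> Qset al be C C k M N. \<exists>xS \<in> X0 al be C C k M N. \<forall>j<N.
        (let y = spot_y al be C k M N (\<lambda>_. f) (\<lambda>_. x) j;
             yS = spot_y al be C k M N (\<lambda>_. 0) (\<lambda>_. xS) j in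
          (real M * xS + real N * yS) / (real M * x + real N * y)
            = (real M * real N + real M + real N) * (real M + 1) /
               (real M * (real M + 1) * (real N + 1) + 2 * (real N + 1 - t)))"
   and "\<exists>(f, x) \<in> Qset al be C C k M N. \<exists>xS \<in> X0 al be C C k M N. \<forall>j<N.
        (let y = spot_y al be C k M N (\<lambda>_. f) (\<lambda>_. x) j;
             yS = spot_y al be C k M N (\<lambda>_. 0) (\<lambda>_. xS) j in
          SW al be C C M N yS xS / SW al be C C M N y x
            = (real M + 1)^2 * (real M * real N + real M + real N) * (real M * real N + real M + real N + 2) /
               ((real N + 1) * ((real M^2 + real M + 2) * t - 2) *
                ((real M^2 + 3 * real M) * t + 2)))"
proof -
  have up: "2 * (t - 1) * A \<le> (real M + 1) * t * real N * k" using upe by simp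
  define xq where "xq = (A - real N * k) / (real M + 1)"
  define F where "F = A + (real N + 1) * k"
  define xS where "xS = A / (real M + 1)"
  note S = setup_all[OF M N be k A lo up t1 tt, folded xq_def F_def xS_def]
  have Mr: "real M \<ge> 1" using M by simp
  have Nr: "real N \<ge> 2" using N by simp
  note core = arith_core[OF Mr Nr k t1 tt lo up, folded xq_def xS_def]
  note ce = arith_eq[OF t1 tt upe]
  define TQ where "TQ = real M * xq + real N * k"
  define TS where "TS = real M * xS + real N * (xS / (real N + 1))"
  define K where "K = real M * real N + real M + real N"
  have TQe: "(real M + 1) * TQ = real M * A + real N * k" using core(1) unfolding TQ_def .
  have TSe: "(real M + 1) * (real N + 1) * TS = A * K" using core(2) unfolding TS_def K_def .
  have TQp: "0 < TQ" using core(3) unfolding TQ_def .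
  have TQS: "TQ < TS" using core(4) unfolding TQ_def TS_def .
  have TSA: "TS < A" using core(5) unfolding TS_def .
  have "real M * real N \<ge> 0" by simp
  hence Kp: "K > 0" unfolding K_def using Mr Nr by linarith
  have mp: "real M + 1 > 0" "real N + 1 > 0" by auto
  have r1: "TS / TQ = K * (real M + 1) / (real M * (real M + 1) * (real N + 1) + 2 * (real N + 1 - t))"
    by (rule ratio1(2)[OF TQe TSe TQp core(6) Kp mp ce(1)])
  have Kd: "2 * ((real M + 1) * (real N + 1)) = K + K + 2" unfolding K_def by (simp add: algebra_simps)
  have r2: "(be * (A * TS - TS^2 / 2)) / (be * (A * TQ - TQ^2 / 2)) = (real M + 1)^2 * K * (K + 2) /
      ((real N + 1) * ((real M^2 + real M + 2) * t - 2) * ((real M^2 + 3 * real M) * t + 2))"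
    by (rule ratio2(2)[OF TQe TSe TQp _ Kp mp core(7) core(8) be Kd ce(2)]) (use TQS TSA in simp)
  have SWQ: "SW al be C C M N k xq = be * (A * TQ - TQ^2 / 2)" using S(5) unfolding TQ_def .
  have SWS: "SW al be C C M N (xS / (real N + 1)) xS = be * (A * TS - TS^2 / 2)" using S(6) unfolding TS_def .
  show "\<exists>(f, x) \<in> Qset al be C C k M N. \<exists>xS \<in> X0 al be C C k M N. \<forall>j<N.
        (let y = spot_y al be C k M N (\<lambda>_. f) (\<lambda>_. x) j;
             yS = spot_y al be C k M N (\<lambda>_. 0) (\<lambda>_. xS) j in
          (real M * xS + real N * yS) / (real M * x + real N * y)
            = (real M * real N + real M + real N) * (real M + 1) /
               (real M * (real M + 1) * (real N + 1) + 2 * (real N + 1 - t)))"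
  proof (rule bexI[OF _ S(1)], simp only: prod.case, rule bexI[OF _ S(2)], intro allI impI)
    fix j assume j: "j < N"
    show "let y = spot_y al be C k M N (\<lambda>_. F) (\<lambda>_. xq) j;
             yS = spot_y al be C k M N (\<lambda>_. 0) (\<lambda>_. xS) j in
          (real M * xS + real N * yS) / (real M * xq + real N * y)
            = (real M * real N + real M + real N) * (real M + 1) /
               (real M * (real M + 1) * (real N + 1) + 2 * (real N + 1 - t))"
      unfolding Let_def S(3)[OF j] S(4)[OF j]
      using r1 unfolding TQ_def TS_def K_def by blast
  qed
  show "\<exists>(f, x) \<in> Qset al be C C k M N. \<exists>xS \<in> X0 al be C C k M N. \<forall>j<N.
        (let y = spot_y al be C k M N (\<lambda>_. f) (\<lambda>_. x) j;
             yS = spot_y al be C k M N (\<lambda>_. 0) (\<lambda>_. xS) j in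
          SW al be C C M N yS xS / SW al be C C M N y x
            = (real M + 1)^2 * (real M * real N + real M + real N) * (real M * real N + real M + real N + 2) /
               ((real N + 1) * ((real M^2 + real M + 2) * t - 2) *
                ((real M^2 + 3 * real M) * t + 2)))"
  proof (rule bexI[OF _ S(1)], simp only: prod.case, rule bexI[OF _ S(2)], intro allI impI)
    fix j assume j: "j < N"
    show "let y = spot_y al be C k M N (\<lambda>_. F) (\<lambda>_. xq) j;
             yS = spot_y al be C k M N (\<lambda>_. 0) (\<lambda>_. xS) j in
          SW al be C C M N yS xS / SW al be C C M N y xq
            = (real M + 1)^2 * (real M * real N + real M + real N) * (real M * real N + real M + real N + 2) /
               ((real N + 1) * ((real M^2 + real M + 2) * t - 2) *
                ((real M^2 + 3 * real M) * t + 2))"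
      unfolding Let_def S(3)[OF j] S(4)[OF j] SWQ SWS
      using r2 unfolding TQ_def TS_def K_def by blast
  qed
qed



theorem lemma10:
  fixes al be C c k :: real and M N :: nat
  assumes "M \<ge> 1" and "N \<ge> 2" and "al > 0" and "be > 0" and "c \<ge> C" and "C > 0" and "k > 0"
    and dC: "(c - C) / be = 0"
  shows
   "((real M + real N + 1) * k \<le> (al - C) / be \<and>
     (al - C) / be \<le> (real M + 1) * sqrt (real N + 1) / (2 * (sqrt (real N + 1) - 1)) * real N * k
     \<longrightarrow>
     (\<exists>(f, x) \<in> Qset al be C c k M N. \<exists>xS \<in> X0 al be C c k M N.
        \<forall>j<N.
        (let y = spot_y al be c k M N (\<lambda>_. f) (\<lambda>_. x) j;
             yS = spot_y al be c k M N (\<lambda>_. 0) (\<lambda>_. xS) j in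
          real M * x + real N * y < real M * xS + real N * yS \<and>
          SW al be C c M N y x < SW al be C c M N yS xS \<and>
          (real M * xS + real N * yS) / (real M * x + real N * y)
            \<le> (real M * real N + real M + real N) * (real M + 1) /
               (real M * (real M + 1) * (real N + 1) + 2 * (real N + 1 - sqrt (real N + 1))) \<and>
          SW al be C c M N yS xS / SW al be C c M N y x
            \<le> (real M + 1)^2 * (real M * real N + real M + real N) * (real M * real N + real M + real N + 2) /
               ((real N + 1) * ((real M^2 + real M + 2) * sqrt (real N + 1) - 2) *
                ((real M^2 + 3 * real M) * sqrt (real N + 1) + 2)))))
   \<and>
   (\<exists>al'. al' > 0 \<and> (real M + real N + 1) * k \<le> (al' - C) / be \<and>
      (al' - C) / be \<le> (real M + 1) * sqrt (real N + 1) / (2 * (sqrt (real N + 1) - 1)) * real N * k \<and>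
      (\<exists>(f, x) \<in> Qset al' be C c k M N. \<exists>xS \<in> X0 al' be C c k M N. \<forall>j<N.
        (let y = spot_y al' be c k M N (\<lambda>_. f) (\<lambda>_. x) j;
             yS = spot_y al' be c k M N (\<lambda>_. 0) (\<lambda>_. xS) j in
          (real M * xS + real N * yS) / (real M * x + real N * y)
            = (real M * real N + real M + real N) * (real M + 1) /
               (real M * (real M + 1) * (real N + 1) + 2 * (real N + 1 - sqrt (real N + 1))))))
   \<and>
   (\<exists>al'. al' > 0 \<and> (real M + real N + 1) * k \<le> (al' - C) / be \<and>
      (al' - C) / be \<le> (real M + 1) * sqrt (real N + 1) / (2 * (sqrt (real N + 1) - 1)) * real N * k \<and>
      (\<exists>(f, x) \<in> Qset al' be C c k M N. \<exists>xS \<in> X0 al' be C c k M N. \<forall>j<N.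
        (let y = spot_y al' be c k M N (\<lambda>_. f) (\<lambda>_. x) j;
             yS = spot_y al' be c k M N (\<lambda>_. 0) (\<lambda>_. xS) j in
          SW al' be C c M N yS xS / SW al' be C c M N y x
            = (real M + 1)^2 * (real M * real N + real M + real N) * (real M * real N + real M + real N + 2) /
               ((real N + 1) * ((real M^2 + real M + 2) * sqrt (real N + 1) - 2) *
                ((real M^2 + 3 * real M) * sqrt (real N + 1) + 2)))))"
proof -
  have be: "be > 0" and k: "k > 0" using assms by auto
  have cC: "c = C" using dC be by simp
  define t where "t = sqrt (real N + 1)"
  have t1: "t > 1" unfolding t_def using assms(2) by simp
  have tt: "t * t = real N + 1" unfolding t_def by simp
  have upiff: "(X \<le> (real M + 1) * t / (2 * (t - 1)) * real N * k) \<longleftrightarrow> 2 * (t - 1) * X \<le> (real M + 1) * t * real N * k" for X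
  proof -
    have "(real M + 1) * t / (2 * (t - 1)) * real N * k = ((real M + 1) * t * real N * k) / (2 * (t - 1))" by simp
    moreover have "2 * (t - 1) > 0" using t1 by simp
    ultimately show ?thesis by (simp add: le_divide_eq mult.commute)
  qed
  have P1: "((real M + real N + 1) * k \<le> (al - C) / be \<and>
     (al - C) / be \<le> (real M + 1) * t / (2 * (t - 1)) * real N * k
     \<longrightarrow>
     (\<exists>(f, x) \<in> Qset al be C C k M N. \<exists>xS \<in> X0 al be C C k M N.
        \<forall>j<N.
        (let y = spot_y al be C k M N (\<lambda>_. f) (\<lambda>_. x) j;
             yS = spot_y al be C k M N (\<lambda>_. 0) (\<lambda>_. xS) j in
          real M * x + real N * y < real M * xS + real N * yS \<and>
          SW al be C C M N y x < SW al be C C M N yS xS \<and>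
          (real M * xS + real N * yS) / (real M * x + real N * y)
            \<le> (real M * real N + real M + real N) * (real M + 1) /
               (real M * (real M + 1) * (real N + 1) + 2 * (real N + 1 - t)) \<and>
          SW al be C C M N yS xS / SW al be C C M N y x
            \<le> (real M + 1)^2 * (real M * real N + real M + real N) * (real M * real N + real M + real N + 2) /
               ((real N + 1) * ((real M^2 + real M + 2) * t - 2) *
                ((real M^2 + 3 * real M) * t + 2)))))"
  proof
    assume h: "(real M + real N + 1) * k \<le> (al - C) / be \<and>
     (al - C) / be \<le> (real M + 1) * t / (2 * (t - 1)) * real N * k"
    have A: "al - C = be * ((al - C) / be)" using be by simp
    show "\<exists>(f, x) \<in> Qset al be C C k M N. \<exists>xS \<in> X0 al be C C k M N.
        \<forall>j<N.
        (let y = spot_y al be C k M N (\<lambda>_. f) (\<lambda>_. x) j;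
             yS = spot_y al be C k M N (\<lambda>_. 0) (\<lambda>_. xS) j in
          real M * x + real N * y < real M * xS + real N * yS \<and>
          SW al be C C M N y x < SW al be C C M N yS xS \<and>
          (real M * xS + real N * yS) / (real M * x + real N * y)
            \<le> (real M * real N + real M + real N) * (real M + 1) /
               (real M * (real M + 1) * (real N + 1) + 2 * (real N + 1 - t)) \<and>
          SW al be C C M N yS xS / SW al be C C M N y x
            \<le> (real M + 1)^2 * (real M * real N + real M + real N) * (real M * real N + real M + real N + 2) /
               ((real N + 1) * ((real M^2 + real M + 2) * t - 2) *
                ((real M^2 + 3 * real M) * t + 2)))"
      by (rule part1[OF assms(1,2) be k A]) (use h upiff t1 tt in auto)
  qed
  define Ab where "Ab = (real M + 1) * t / (2 * (t - 1)) * real N * k"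
  define al' where "al' = C + be * Ab"
  have tm: "t - 1 > 0" using t1 by simp
  have upe: "2 * (t - 1) * Ab = (real M + 1) * t * real N * k" unfolding Ab_def using tm by simp
  have Abe: "(al' - C) / be = Ab" unfolding al'_def using be by simp
  have Ab0: "Ab > 0" unfolding Ab_def using t1 k assms(1,2) by simp
  have al'0: "al' > 0" unfolding al'_def using mult_pos_pos[OF be Ab0] assms(6) by linarith
  have lo: "(real M + real N + 1) * k \<le> Ab"
  proof -
    have Nt: "real N = (t - 1) * (t + 1)" using tt by (simp add: algebra_simps)
    have "real M * real N \<ge> 1 * real N" using assms(1) by (intro mult_right_mono) auto
    moreover have "real M * t \<ge> real M * 1" using t1 by (intro mult_left_mono) auto
    ultimately have "real M * (real N + t) + t \<ge> real M + real N + 1" using t1 by (simp add: algebra_simps)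
    hence "2 * (real M + real N + 1) \<le> (real M + 1) * (t * t + t)" using tt by (simp add: algebra_simps)
    hence "(t - 1) * k * (2 * (real M + real N + 1)) \<le> (t - 1) * k * ((real M + 1) * (t * t + t))"
      using tm k by (intro mult_left_mono) auto
    hence "2 * (t - 1) * ((real M + real N + 1) * k) \<le> (real M + 1) * t * real N * k"
      unfolding Nt by (simp add: algebra_simps)
    thus ?thesis using upiff[of "(real M + real N + 1) * k"] unfolding Ab_def by simp
  qed
  have A': "al' - C = be * Ab" unfolding al'_def by simp
  note PE = part_eq[OF assms(1,2) be k A' lo upe t1 tt]
  have upA: "Ab \<le> (real M + 1) * t / (2 * (t - 1)) * real N * k" unfolding Ab_def by simp
  show ?thesis
    unfolding cC t_def[symmetric]
    using P1 PE al'0 lo upA Abe by blast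
qed

end
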